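(* Fix block sizes $k_1,\dots,k_p$ with $m=\sum_ik_i$, $\sigma^2>0$ and $\bar\theta=[\bar\theta^{(1)\top},\dots,\bar\theta^{(p)\top}]^\top\in\mathbb{R}^m$. For each $n\ge m$ let $G_n=[G_n^{(1)},\dots,G_n^{(p)}]\in\mathbb{R}^{n\times m}$ with $G_n^{(i)}\in\mathbb{R}^{n\times k_i}$ and $G_n^\top G_n=nI_m$, and let $y=G_n\bar\theta+v$ with $v\sim\mathcal N(0,\sigma^2I_n)$. Let $\hat\theta_{LS}^{(i)}=\frac1n(G_n^{(i)})^\top y$, and define $$\hat\lambda_i^*:=\frac{\|\hat\theta_{LS}^{(i)}\|^2}{k_i}-\frac{\sigma^2}{n},\qquad \hat\lambda_i(0):=\max(0,\hat\lambda_i^* ),\qquad \lambda_i^{opt}:=\frac{\|\bar\theta^{(i)}\|^2}{k_i}.$$ Then $\hat\lambda^*=(\hat\lambda_1^*,\dots,\hat\lambda_p^* )$ is an unbiased and mean-square consistent estimator of $\lambda^{opt}$, while $\hat\lambda(0)=(\hat\lambda_1(0),\dots,\hat\lambda_p(0))$ is asymptotically unbiased and consistent: $$\mathbb{E}[\hat\lambda_i^*\mid\theta=\bar\theta]=\lambda_i^{opt},\qquad \lim_{n\to\infty}\mathbb{E}[\hat\lambda_i(0)\mid\theta=\bar\theta]=\lambda_i^{opt},$$ and $\hat\lambda_i^*\to\lambda_i^{opt}$ and $\hat\lambda_i(0)\to\lambda_i^{opt}$ in mean square as $n\to\infty$, for each $i$.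
   Context: $\lambda^{opt}$ is the minimizer of the mean squared error $\mathrm{tr}\,\mathbb{E}_v[(\hat\theta(\lambda)-\bar\theta)(\hat\theta(\lambda)-\bar\theta)^\top]$ of the Bayes estimator $\hat\theta(\lambda)=\Lambda G_n^\top(G_n\Lambda G_n^\top+\sigma^2I)^{-1}y$, $\Lambda=\mathrm{blockdiag}(\lambda_iI_{k_i})$, when $G_n^\top G_n=nI$. $\hat\lambda(0)$ is the limit as $\gamma\to0$ of the maximizer of the marginal posterior of $\lambda$ in the hierarchical model with exponential($\gamma$) prior on each $\lambda_i$ and $\theta^{(i)}\mid\lambda_i\sim\mathcal N(0,\lambda_iI_{k_i})$. Conditioning on $\theta=\bar\theta$ means the only randomness is the noise $v$. *)

theory Defs
  imports "HOL-Probability.Probability"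
begin

text \<open>Noise model: v = (v_0,...,v_{n-1}) with i.i.d. N(0, sigma2) entries,
  i.e. v ~ N(0, sigma2 I_n), realised as a finite product measure.
  normal_density takes the standard deviation, hence sqrt sigma2.\<close>
definition noise :: "real \<Rightarrow> nat \<Rightarrow> (nat \<Rightarrow> real) measure" where
  "noise sigma2 n = PiM {..<n} (\<lambda>_. density lborel (normal_density 0 (sqrt sigma2)))"

definition blk_off :: "(nat \<Rightarrow> nat) \<Rightarrow> nat \<Rightarrow> nat" where
  "blk_off k i = (\<Sum>j<i. k j)"

definition blk :: "(nat \<Rightarrow> nat) \<Rightarrow> nat \<Rightarrow> nat set" where
  "blk k i = {blk_off k i ..< blk_off k i + k i}"

text \<open>Output y = G_n thetabar + v; G n j c is entry (j,c) of G_n (j < n, c < m).\<close>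
definition yobs :: "(nat \<Rightarrow> nat \<Rightarrow> nat \<Rightarrow> real) \<Rightarrow> nat \<Rightarrow> (nat \<Rightarrow> real) \<Rightarrow> nat
    \<Rightarrow> (nat \<Rightarrow> real) \<Rightarrow> nat \<Rightarrow> real" where
  "yobs G m thbar n v j = (\<Sum>c<m. G n j c * thbar c) + v j"

definition theta_LS :: "(nat \<Rightarrow> nat \<Rightarrow> nat \<Rightarrow> real) \<Rightarrow> nat \<Rightarrow> (nat \<Rightarrow> real) \<Rightarrow> nat
    \<Rightarrow> (nat \<Rightarrow> real) \<Rightarrow> nat \<Rightarrow> real" where
  "theta_LS G m thbar n v c = (1 / real n) * (\<Sum>j<n. G n j c * yobs G m thbar n v j)"

definition lambda_star :: "(nat \<Rightarrow> nat) \<Rightarrow> real \<Rightarrow> (nat \<Rightarrow> nat \<Rightarrow> nat \<Rightarrow> real) \<Rightarrow> nat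
    \<Rightarrow> (nat \<Rightarrow> real) \<Rightarrow> nat \<Rightarrow> nat \<Rightarrow> (nat \<Rightarrow> real) \<Rightarrow> real" where
  "lambda_star k sigma2 G m thbar i n v =
     (\<Sum>c\<in>blk k i. (theta_LS G m thbar n v c)\<^sup>2) / real (k i) - sigma2 / real n"

definition lambda_hat0 :: "(nat \<Rightarrow> nat) \<Rightarrow> real \<Rightarrow> (nat \<Rightarrow> nat \<Rightarrow> nat \<Rightarrow> real) \<Rightarrow> nat
    \<Rightarrow> (nat \<Rightarrow> real) \<Rightarrow> nat \<Rightarrow> nat \<Rightarrow> (nat \<Rightarrow> real) \<Rightarrow> real" where
  "lambda_hat0 k sigma2 G m thbar i n v = max 0 (lambda_star k sigma2 G m thbar i n v)"

definition lambda_opt :: "(nat \<Rightarrow> nat) \<Rightarrow> (nat \<Rightarrow> real) \<Rightarrow> nat \<Rightarrow> real" where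
  "lambda_opt k thbar i = (\<Sum>c\<in>blk k i. (thbar c)\<^sup>2) / real (k i)"

end

theory Submission imports Defs begin

lemma noise_prob: "0 < s2 \<Longrightarrow> prob_space (noise s2 n)"
  unfolding noise_def by (rule prob_space_PiM) (rule prob_space_normal_density, simp)

lemma coord_meas: "i < n \<Longrightarrow> (\<lambda>v. v i) \<in> measurable (noise s2 n) (density lborel (normal_density 0 (sqrt s2)))"
  unfolding noise_def
  apply (rule measurable_component_singleton)
  by simp

lemma coord_distr:
  assumes "j < n" "0 < s2"
  shows "distr (noise s2 n) lborel (\<lambda>v. v j) = density lborel (normal_density 0 (sqrt s2))"
proof -
  have "distr (noise s2 n) lborel (\<lambda>v. v j) = distr (noise s2 n) (density lborel (normal_density 0 (sqrt s2))) (\<lambda>v. v j)"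
    by (rule distr_cong) auto
  also have "\<dots> = density lborel (normal_density 0 (sqrt s2))"
    unfolding noise_def using assms by (intro distr_PiM_component prob_space_normal_density) auto
  finally show ?thesis .
qed

lemma coord_indep:
  assumes "I \<subseteq> {..<n}" "I \<noteq> {}" "0 < s2"
  shows "prob_space.indep_vars (noise s2 n) (\<lambda>_. density lborel (normal_density 0 (sqrt s2))) (\<lambda>j v. v j) I"
proof -
  let ?N = "density lborel (normal_density 0 (sqrt s2))"
  interpret P: prob_space "noise s2 n" by (rule noise_prob) fact
  interpret PP: product_prob_space "\<lambda>_. ?N"
    by (rule product_prob_spaceI) (rule prob_space_normal_density, simp add: assms)
  show ?thesis
  proof (subst P.indep_vars_iff_distr_eq_PiM')
    show "I \<noteq> {}" by fact
    fix i assume "i \<in> I"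
    then have "i < n" using assms by auto
    then show "(\<lambda>v. v i) \<in> measurable (noise s2 n) ?N" by (rule coord_meas)
  next
    have "distr (noise s2 n) (PiM I (\<lambda>_. ?N)) (\<lambda>x. \<lambda>i\<in>I. x i) = PiM I (\<lambda>_. ?N)"
      unfolding noise_def using PP.distr_restrict[of I "{..<n}"] assms
      by (simp add: restrict_def)
    moreover have "PiM I (\<lambda>i. distr (noise s2 n) ?N (\<lambda>x. x i)) = PiM I (\<lambda>_. ?N)"
      unfolding noise_def using assms
      by (intro PiM_cong refl distr_PiM_component prob_space_normal_density) auto
    ultimately show "distr (noise s2 n) (PiM I (\<lambda>_. ?N)) (\<lambda>x. \<lambda>i\<in>I. x i) = PiM I (\<lambda>i. distr (noise s2 n) ?N (\<lambda>x. x i))"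
      by simp
  qed
qed

lemma coord_distributed:
  assumes "j < n" "0 < s2"
  shows "distributed (noise s2 n) lborel (\<lambda>v. v j) (normal_density 0 (sqrt s2))"
  unfolding distributed_def
proof (intro conjI)
  show "distr (noise s2 n) lborel (\<lambda>v. v j) = density lborel (normal_density 0 (sqrt s2))"
    using coord_distr[OF assms] .
  show "(\<lambda>x. ennreal (normal_density 0 (sqrt s2) x)) \<in> borel_measurable lborel" by simp
  have "(\<lambda>v. v j) \<in> measurable (noise s2 n) (density lborel (normal_density 0 (sqrt s2)))"
    using assms(1) by (rule coord_meas)
  then show "(\<lambda>v. v j) \<in> measurable (noise s2 n) lborel"
  proof -
    have "measurable (noise s2 n) (density lborel (normal_density 0 (sqrt s2))) = measurable (noise s2 n) lborel"
      by (rule measurable_cong_sets) auto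
    then show ?thesis using \<open>(\<lambda>v. v j) \<in> _\<close> by simp
  qed
qed

lemma gauss_lin:
  assumes s2: "0 < s2" and apos: "0 < (\<Sum>j<n. (a j)\<^sup>2)"
  shows "distributed (noise s2 n) lborel (\<lambda>v. \<Sum>j<n. a j * v j)
           (normal_density 0 (sqrt (s2 * (\<Sum>j<n. (a j)\<^sup>2))))"
proof -
  interpret P: prob_space "noise s2 n" by (rule noise_prob) fact
  define I where "I = {j. j < n \<and> a j \<noteq> 0}"
  have finI: "finite I" unfolding I_def by auto
  have Isub: "I \<subseteq> {..<n}" unfolding I_def by auto
  have sumI: "(\<Sum>j<n. f j) = (\<Sum>j\<in>I. f j)" if "\<And>j. a j = 0 \<Longrightarrow> f j = 0" for f :: "nat \<Rightarrow> real"
    by (rule sum.mono_neutral_right) (auto simp: I_def that)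
  have Ine: "I \<noteq> {}"
  proof
    assume "I = {}"
    then have "(\<Sum>j<n. (a j)\<^sup>2) = 0" using sumI[of "\<lambda>j. (a j)\<^sup>2"] by simp
    with apos show False by simp
  qed
  have ind0: "P.indep_vars (\<lambda>_. density lborel (normal_density 0 (sqrt s2))) (\<lambda>j v. v j) I"
    by (rule coord_indep[OF Isub Ine s2])
  have ind: "P.indep_vars (\<lambda>_. borel) (\<lambda>j v. a j * v j) I"
    by (rule P.indep_vars_compose2[OF ind0, where Y="\<lambda>j x. a j * x"]) simp
  have dj: "distributed (noise s2 n) lborel (\<lambda>v. a j * v j) (normal_density 0 (\<bar>a j\<bar> * sqrt s2))"
    if "j \<in> I" for j
  proof -
    have "j < n" "a j \<noteq> 0" using that by (auto simp: I_def)
    from P.normal_density_affine[OF coord_distributed[OF \<open>j < n\<close> s2] _ \<open>a j \<noteq> 0\<close>, of 0] s2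
    show ?thesis by simp
  qed
  have "distributed (noise s2 n) lborel (\<lambda>v. \<Sum>j\<in>I. a j * v j)
      (normal_density (\<Sum>j\<in>I. 0) (sqrt (\<Sum>j\<in>I. (\<bar>a j\<bar> * sqrt s2)\<^sup>2)))"
    by (rule P.sum_indep_normal[OF finI Ine ind _ dj]) (use s2 in \<open>auto simp: I_def\<close>)
  moreover have "(\<lambda>v. \<Sum>j\<in>I. a j * v j) = (\<lambda>v. \<Sum>j<n. a j * v j)"
    by (rule ext, rule sumI[symmetric]) simp
  moreover have "(\<Sum>j\<in>I. (\<bar>a j\<bar> * sqrt s2)\<^sup>2) = s2 * (\<Sum>j<n. (a j)\<^sup>2)"
    using s2 by (simp add: sumI[of "\<lambda>j. (a j)\<^sup>2"] power_mult_distrib sum_distrib_left mult.commute)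
  ultimately show ?thesis by simp
qed

lemma normal_moments:
  assumes D: "distributed M lborel Y (normal_density 0 t)" and t: "0 < t"
  shows "integrable M (\<lambda>x. (Y x) ^ k)" "Y \<in> borel_measurable M"
    "(\<integral>x. Y x \<partial>M) = 0" "(\<integral>x. (Y x)^2 \<partial>M) = t^2" "(\<integral>x. (Y x)^4 \<partial>M) = 3*t^4"
proof -
  have *: "integrable lborel (\<lambda>x. normal_density 0 t x * x ^ k)" for k
    using integrable_normal_moment[of t 0 k] t by simp
  show "integrable M (\<lambda>x. (Y x) ^ k)"
    using distributed_integrable[OF D, of "\<lambda>x. x ^ k"] * by simp
  show "Y \<in> borel_measurable M" using distributed_measurable[OF D] by simp
  have "(\<integral>x. Y x ^ 1 \<partial>M) = (\<integral>x. normal_density 0 t x * x ^ (2*0+1) \<partial>lborel)"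
    by (subst distributed_integral[OF D, symmetric]) auto
  also have "\<dots> = 0" using integral_normal_moment_odd[of t 0 0] t by simp
  finally show "(\<integral>x. Y x \<partial>M) = 0" by simp
  have "(\<integral>x. Y x ^ (2*1) \<partial>M) = (\<integral>x. normal_density 0 t x * x ^ (2*1) \<partial>lborel)"
    by (subst distributed_integral[OF D, symmetric]) auto
  also have "\<dots> = t^2" using integral_normal_moment_even[of t 0 1] t by simp
  finally show "(\<integral>x. (Y x)^2 \<partial>M) = t^2" by simp
  have "(\<integral>x. Y x ^ (2*2) \<partial>M) = (\<integral>x. normal_density 0 t x * x ^ (2*2) \<partial>lborel)"
    by (subst distributed_integral[OF D, symmetric]) auto
  also have "\<dots> = 3*t^4" using integral_normal_moment_even[of t 0 2] t
    by (simp add: fact_numeral field_simps power2_eq_square) (simp add: numeral_eq_Suc)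
  finally show "(\<integral>x. (Y x)^4 \<partial>M) = 3*t^4" by simp
qed


lemma sq3: "((a::real) + b + c)\<^sup>2 \<le> 3 * (a\<^sup>2 + b\<^sup>2 + c\<^sup>2)"
proof -
  have "0 \<le> (a-b)\<^sup>2 + (b-c)\<^sup>2 + (a-c)\<^sup>2" by simp
  then show ?thesis by (simp add: power2_eq_square algebra_simps)
qed

lemma max_sq: "0 \<le> (a::real) \<Longrightarrow> (max 0 x - a)\<^sup>2 \<le> (x - a)\<^sup>2"
proof (cases "0 \<le> x")
  case False
  assume a: "0 \<le> a"
  have "0 \<le> x * (x - 2*a)" using False a by (intro mult_nonpos_nonpos) auto
  then show ?thesis using False by (simp add: power2_eq_square algebra_simps)
qed simp

lemma per_n:
  fixes p m :: nat and k :: "nat \<Rightarrow> nat" and sigma2 :: real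
    and thbar :: "nat \<Rightarrow> real" and G :: "nat \<Rightarrow> nat \<Rightarrow> nat \<Rightarrow> real"
  assumes k_pos: "\<And>i. i < p \<Longrightarrow> 0 < k i"
    and m_def: "m = (\<Sum>i<p. k i)"
    and sigma_pos: "0 < sigma2"
    and orth: "\<And>n c c'. m \<le> n \<Longrightarrow> c < m \<Longrightarrow> c' < m \<Longrightarrow>
                 (\<Sum>j<n. G n j c * G n j c') = (if c = c' then real n else 0)"
    and i_lt: "i < p"
    and nm: "m \<le> n"
  shows "integrable (noise sigma2 n) (lambda_star k sigma2 G m thbar i n)
    \<and> (\<integral>v. lambda_star k sigma2 G m thbar i n v \<partial>noise sigma2 n) = lambda_opt k thbar i
    \<and> integrable (noise sigma2 n) (\<lambda>v. (lambda_star k sigma2 G m thbar i n v - lambda_opt k thbar i)\<^sup>2)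
    \<and> (\<integral>v. (lambda_star k sigma2 G m thbar i n v - lambda_opt k thbar i)\<^sup>2 \<partial>noise sigma2 n)
        \<le> 12 * (\<Sum>c\<in>blk k i. (thbar c)\<^sup>2) * sigma2 / (real (k i) * real n) + 12 * sigma2\<^sup>2 / (real n)\<^sup>2
    \<and> integrable (noise sigma2 n) (lambda_hat0 k sigma2 G m thbar i n)
    \<and> integrable (noise sigma2 n) (\<lambda>v. (lambda_hat0 k sigma2 G m thbar i n v - lambda_opt k thbar i)\<^sup>2)
    \<and> (\<integral>v. (lambda_hat0 k sigma2 G m thbar i n v - lambda_opt k thbar i)\<^sup>2 \<partial>noise sigma2 n)
        \<le> (\<integral>v. (lambda_star k sigma2 G m thbar i n v - lambda_opt k thbar i)\<^sup>2 \<partial>noise sigma2 n)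
    \<and> ((\<integral>v. lambda_hat0 k sigma2 G m thbar i n v \<partial>noise sigma2 n) - lambda_opt k thbar i)\<^sup>2
        \<le> (\<integral>v. (lambda_hat0 k sigma2 G m thbar i n v - lambda_opt k thbar i)\<^sup>2 \<partial>noise sigma2 n)"
proof -
  let ?P = "noise sigma2 n"
  interpret P: prob_space ?P using noise_prob sigma_pos by blast
  define B where "B = blk k i"
  define K where "K = real (k i)"
  define S where "S = (\<Sum>c\<in>B. (thbar c)\<^sup>2)"
  define w where "w = (\<lambda>c v. \<Sum>j<n. (G n j c / real n) * v j)"
  have Kpos: "K > 0" using k_pos[OF i_lt] by (simp add: K_def)
  have cardB: "card B = k i" by (simp add: B_def blk_def)
  have finB: "finite B" by (simp add: B_def blk_def)
  have kim: "k i \<le> m" unfolding m_def using i_lt by (intro member_le_sum) auto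
  have npos: "0 < n" using kim nm k_pos[OF i_lt] by linarith
  have Bm: "c < m" if "c \<in> B" for c
  proof -
    have "blk_off k i + k i = (\<Sum>j<Suc i. k j)" by (simp add: blk_off_def)
    also have "\<dots> \<le> (\<Sum>j<p. k j)" using i_lt by (intro sum_mono2) auto
    finally show ?thesis using that unfolding B_def blk_def m_def by auto
  qed
  have thLS: "theta_LS G m thbar n v c = thbar c + w c v" if "c < m" for c v
  proof -
    have "(\<Sum>j<n. G n j c * yobs G m thbar n v j)
        = (\<Sum>j<n. \<Sum>c'<m. G n j c * G n j c' * thbar c') + (\<Sum>j<n. G n j c * v j)"
      by (simp add: yobs_def distrib_left sum.distrib sum_distrib_left mult.assoc)
    also have "(\<Sum>j<n. \<Sum>c'<m. G n j c * G n j c' * thbar c') = (\<Sum>c'<m. thbar c' * (\<Sum>j<n. G n j c * G n j c'))"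
      by (subst sum.swap) (simp add: sum_distrib_left mult.commute mult.left_commute)
    also have "\<dots> = (\<Sum>c'<m. if c = c' then thbar c' * real n else 0)"
      using orth[OF nm that] by (intro sum.cong) auto
    also have "\<dots> = thbar c * real n" using that by simp
    finally show ?thesis using npos
      by (simp add: theta_LS_def w_def field_simps sum_divide_distrib[symmetric])
  qed
  have lstar: "lambda_star k sigma2 G m thbar i n = (\<lambda>v. (\<Sum>c\<in>B. (thbar c + w c v)\<^sup>2) / K - sigma2 / real n)"
    by (rule ext) (simp add: lambda_star_def B_def K_def thLS Bm)
  have aopt: "lambda_opt k thbar i = S / K" by (simp add: lambda_opt_def S_def B_def K_def)
  define t where "t = sqrt (sigma2 / real n)"
  have tpos: "0 < t" using sigma_pos npos by (simp add: t_def)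
  have t2: "t\<^sup>2 = sigma2 / real n" using sigma_pos npos by (simp add: t_def)
  have wdist: "distributed ?P lborel (w c) (normal_density 0 t)" if "c \<in> B" for c
  proof -
    have "(\<Sum>j<n. (G n j c / real n)\<^sup>2) = (\<Sum>j<n. G n j c * G n j c) / (real n)\<^sup>2"
      by (simp add: power2_eq_square sum_divide_distrib)
    also have "\<dots> = 1 / real n" using orth[OF nm Bm[OF that] Bm[OF that]] npos
      by (simp add: power2_eq_square)
    finally have e: "(\<Sum>j<n. (G n j c / real n)\<^sup>2) = 1 / real n" .
    have "distributed ?P lborel (\<lambda>v. \<Sum>j<n. (G n j c / real n) * v j)
           (normal_density 0 (sqrt (sigma2 * (\<Sum>j<n. (G n j c / real n)\<^sup>2))))"
      by (rule gauss_lin) (use sigma_pos npos e in auto)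
    then show ?thesis unfolding e by (simp add: w_def t_def)
  qed
  have wint: "integrable ?P (\<lambda>v. (w c v) ^ q)" if "c \<in> B" for c q
    using normal_moments(1)[OF wdist[OF that] tpos] .
  have w1: "(\<integral>v. w c v \<partial>?P) = 0" if "c \<in> B" for c
    using normal_moments(3)[OF wdist[OF that] tpos] .
  have w2: "(\<integral>v. (w c v)\<^sup>2 \<partial>?P) = sigma2 / real n" if "c \<in> B" for c
    using normal_moments(4)[OF wdist[OF that] tpos] t2 by simp
  have w4: "(\<integral>v. (w c v)^4 \<partial>?P) = 3 * (sigma2 / real n)\<^sup>2" if "c \<in> B" for c
    using normal_moments(5)[OF wdist[OF that] tpos] t2 by (simp add: power_mult[symmetric] flip: t2)
  have wint1: "integrable ?P (w c)" if "c \<in> B" for c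
    using wint[OF that, of 1] by simp
  have wmeas[measurable]: "w c \<in> borel_measurable ?P" for c
    unfolding w_def noise_def by measurable
  have sqeq: "(thbar c + w c v)\<^sup>2 = (thbar c)\<^sup>2 + 2 * thbar c * w c v + (w c v)\<^sup>2" for c v
    by (simp add: power2_eq_square algebra_simps)
  have sqint: "integrable ?P (\<lambda>v. (thbar c + w c v)\<^sup>2)" if "c \<in> B" for c
  proof -
    have "integrable ?P (\<lambda>v. (thbar c)\<^sup>2 + 2 * thbar c * w c v + (w c v)\<^sup>2)"
      using wint[OF that, of 2] wint1[OF that] by auto
    then show ?thesis by (simp only: sqeq)
  qed
  have sqE: "(\<integral>v. (thbar c + w c v)\<^sup>2 \<partial>?P) = (thbar c)\<^sup>2 + sigma2 / real n" if "c \<in> B" for c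
  proof -
    have "(\<integral>v. (thbar c + w c v)\<^sup>2 \<partial>?P) = (\<integral>v. (thbar c)\<^sup>2 + 2 * thbar c * w c v + (w c v)\<^sup>2 \<partial>?P)"
      by (simp only: sqeq)
    also have "\<dots> = (thbar c)\<^sup>2 + 2 * thbar c * (\<integral>v. w c v \<partial>?P) + (\<integral>v. (w c v)\<^sup>2 \<partial>?P)"
      using wint[OF that, of 2] wint1[OF that] by (simp add: P.prob_space)
    finally show ?thesis using w1[OF that] w2[OF that] by simp
  qed
  have int_star: "integrable ?P (lambda_star k sigma2 G m thbar i n)"
    unfolding lstar using sqint by auto
  have E_star: "(\<integral>v. lambda_star k sigma2 G m thbar i n v \<partial>?P) = lambda_opt k thbar i"
  proof -
    have "(\<integral>v. lambda_star k sigma2 G m thbar i n v \<partial>?P)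
        = (\<Sum>c\<in>B. (\<integral>v. (thbar c + w c v)\<^sup>2 \<partial>?P)) / K - sigma2 / real n"
      unfolding lstar using sqint by (simp add: integral_sum P.prob_space)
    also have "\<dots> = (S + K * (sigma2 / real n)) / K - sigma2 / real n"
      using sqE by (simp add: sum.distrib S_def cardB K_def)
    also have "\<dots> = S / K" using Kpos by (simp add: field_simps)
    finally show ?thesis by (simp add: aopt)
  qed
  define X where "X = (\<lambda>v. \<Sum>c\<in>B. thbar c * w c v)"
  define Y where "Y = (\<lambda>v. \<Sum>c\<in>B. (w c v)\<^sup>2)"
  define R where "R = (\<lambda>v. 3 * (4 * S * Y v / K\<^sup>2 + (\<Sum>c\<in>B. (w c v)^4) / K + (sigma2 / real n)\<^sup>2))"
  have Dform: "lambda_star k sigma2 G m thbar i n v - lambda_opt k thbar i = 2 * X v / K + Y v / K + (- (sigma2 / real n))" for v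
  proof -
    have "(\<Sum>c\<in>B. (thbar c + w c v)\<^sup>2) = S + 2 * X v + Y v"
      by (simp add: sqeq sum.distrib S_def X_def Y_def sum_distrib_left mult.assoc)
    then show ?thesis using Kpos unfolding lstar aopt by (simp add: field_simps)
  qed
  have Dle: "(lambda_star k sigma2 G m thbar i n v - lambda_opt k thbar i)\<^sup>2 \<le> R v" for v
  proof -
    have cs1: "(X v)\<^sup>2 \<le> S * Y v"
      unfolding X_def S_def Y_def by (rule Cauchy_Schwarz_ineq_sum)
    have cs2: "(Y v)\<^sup>2 \<le> K * (\<Sum>c\<in>B. (w c v)^4)"
    proof -
      have "(Y v)\<^sup>2 = (\<Sum>c\<in>B. 1 * (w c v)\<^sup>2)\<^sup>2" by (simp add: Y_def)
      also have "\<dots> \<le> (\<Sum>c\<in>B. 1\<^sup>2) * (\<Sum>c\<in>B. ((w c v)\<^sup>2)\<^sup>2)" by (rule Cauchy_Schwarz_ineq_sum)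
      finally show ?thesis by (simp add: cardB K_def power_mult[symmetric] flip: power_mult)
    qed
    have "(lambda_star k sigma2 G m thbar i n v - lambda_opt k thbar i)\<^sup>2
        \<le> 3 * ((2 * X v / K)\<^sup>2 + (Y v / K)\<^sup>2 + (- (sigma2 / real n))\<^sup>2)"
      unfolding Dform by (rule sq3)
    also have "(2 * X v / K)\<^sup>2 = 4 * (X v)\<^sup>2 / K\<^sup>2" by (simp add: power_divide power_mult_distrib)
    also have "\<dots> \<le> 4 * (S * Y v) / K\<^sup>2" using cs1 Kpos by (intro divide_right_mono) auto
    also have "(Y v / K)\<^sup>2 = (Y v)\<^sup>2 / K\<^sup>2" by (simp add: power_divide)
    also have "\<dots> \<le> K * (\<Sum>c\<in>B. (w c v)^4) / K\<^sup>2" using cs2 Kpos by (intro divide_right_mono) auto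
    also have "K * (\<Sum>c\<in>B. (w c v)^4) / K\<^sup>2 = (\<Sum>c\<in>B. (w c v)^4) / K" using Kpos
      by (simp add: power2_eq_square)
    finally show ?thesis by (simp add: R_def mult.assoc)
  qed
  have Yint: "integrable ?P Y" unfolding Y_def using wint by auto
  have Rint: "integrable ?P R" unfolding R_def using Yint wint by auto
  have EY: "(\<integral>v. Y v \<partial>?P) = K * (sigma2 / real n)"
    unfolding Y_def using wint w2 by (simp add: integral_sum cardB K_def)
  have ER: "(\<integral>v. R v \<partial>?P) = 12 * S * sigma2 / (K * real n) + 12 * sigma2\<^sup>2 / (real n)\<^sup>2"
  proof -
    have "(\<integral>v. R v \<partial>?P) = 3 * (4 * S * (\<integral>v. Y v \<partial>?P) / K\<^sup>2 + (\<Sum>c\<in>B. (\<integral>v. (w c v)^4 \<partial>?P)) / K + (sigma2 / real n)\<^sup>2)"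
      unfolding R_def using Yint wint by (simp add: integral_sum P.prob_space)
    also have "\<dots> = 3 * (4 * S * (K * (sigma2 / real n)) / K\<^sup>2 + (K * (3 * (sigma2 / real n)\<^sup>2)) / K + (sigma2 / real n)\<^sup>2)"
      using w4 by (simp add: EY cardB K_def)
    also have "\<dots> = 12 * S * sigma2 / (K * real n) + 12 * sigma2\<^sup>2 / (real n)\<^sup>2"
      using Kpos npos by (simp add: field_simps power2_eq_square)
    finally show ?thesis .
  qed
  have lsmeas[measurable]: "lambda_star k sigma2 G m thbar i n \<in> borel_measurable ?P"
    unfolding lstar by measurable
  have Dint: "integrable ?P (\<lambda>v. (lambda_star k sigma2 G m thbar i n v - lambda_opt k thbar i)\<^sup>2)"
  proof (rule Bochner_Integration.integrable_bound[OF Rint])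
    show "AE v in ?P. norm ((lambda_star k sigma2 G m thbar i n v - lambda_opt k thbar i)\<^sup>2) \<le> norm (R v)"
      using Dle by (auto intro!: AE_I2 order_trans[OF Dle] simp del: power2_abs)
  qed measurable
  have ED: "(\<integral>v. (lambda_star k sigma2 G m thbar i n v - lambda_opt k thbar i)\<^sup>2 \<partial>?P) \<le> 12 * S * sigma2 / (K * real n) + 12 * sigma2\<^sup>2 / (real n)\<^sup>2"
    unfolding ER[symmetric] using Dint Rint Dle by (intro integral_mono) auto
  have hdef: "lambda_hat0 k sigma2 G m thbar i n = (\<lambda>v. max 0 (lambda_star k sigma2 G m thbar i n v))"
    by (rule ext) (simp add: lambda_hat0_def)
  have hmeas[measurable]: "lambda_hat0 k sigma2 G m thbar i n \<in> borel_measurable ?P"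
    unfolding hdef by measurable
  have hint: "integrable ?P (lambda_hat0 k sigma2 G m thbar i n)"
  proof (rule Bochner_Integration.integrable_bound[OF int_star])
    show "AE v in ?P. norm (lambda_hat0 k sigma2 G m thbar i n v) \<le> norm (lambda_star k sigma2 G m thbar i n v)"
      by (intro AE_I2) (simp add: hdef)
  qed measurable
  have aopt_nn: "0 \<le> lambda_opt k thbar i" unfolding aopt S_def using Kpos by (intro divide_nonneg_pos sum_nonneg) auto
  have hle: "(lambda_hat0 k sigma2 G m thbar i n v - lambda_opt k thbar i)\<^sup>2 \<le> (lambda_star k sigma2 G m thbar i n v - lambda_opt k thbar i)\<^sup>2" for v
    unfolding hdef using max_sq[OF aopt_nn] by simp
  have h2int: "integrable ?P (\<lambda>v. (lambda_hat0 k sigma2 G m thbar i n v - lambda_opt k thbar i)\<^sup>2)"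
  proof (rule Bochner_Integration.integrable_bound[OF Dint])
    show "AE v in ?P. norm ((lambda_hat0 k sigma2 G m thbar i n v - lambda_opt k thbar i)\<^sup>2) \<le> norm ((lambda_star k sigma2 G m thbar i n v - lambda_opt k thbar i)\<^sup>2)"
      using hle by (intro AE_I2) (simp del: power2_abs)
  qed measurable
  have Eh2: "(\<integral>v. (lambda_hat0 k sigma2 G m thbar i n v - lambda_opt k thbar i)\<^sup>2 \<partial>?P)
        \<le> (\<integral>v. (lambda_star k sigma2 G m thbar i n v - lambda_opt k thbar i)\<^sup>2 \<partial>?P)"
    using h2int Dint hle by (intro integral_mono) auto
  define Z where "Z = (\<lambda>v. lambda_hat0 k sigma2 G m thbar i n v - lambda_opt k thbar i)"
  have Zint: "integrable ?P Z" unfolding Z_def using hint by simp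
  have Z2int: "integrable ?P (\<lambda>v. (Z v)\<^sup>2)" unfolding Z_def using h2int by simp
  have EZ: "(\<integral>v. Z v \<partial>?P) = (\<integral>v. lambda_hat0 k sigma2 G m thbar i n v \<partial>?P) - lambda_opt k thbar i"
    unfolding Z_def using hint by (simp add: P.prob_space)
  have "0 \<le> (\<integral>v. (Z v - (\<integral>v. Z v \<partial>?P))\<^sup>2 \<partial>?P)" by (rule Bochner_Integration.integral_nonneg) simp
  also have "\<dots> = (\<integral>v. (Z v)\<^sup>2 \<partial>?P) - (\<integral>v. Z v \<partial>?P)\<^sup>2"
    by (rule P.variance_eq[OF Zint Z2int])
  finally have jens: "(\<integral>v. Z v \<partial>?P)\<^sup>2 \<le> (\<integral>v. (Z v)\<^sup>2 \<partial>?P)" by simp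
  show ?thesis
    using int_star E_star Dint ED hint h2int Eh2 jens
    unfolding EZ Z_def S_def B_def K_def by (simp add: P.prob_space)
qed

theorem corollary10:
  fixes p m :: nat and k :: "nat \<Rightarrow> nat" and sigma2 :: real
    and thbar :: "nat \<Rightarrow> real" and G :: "nat \<Rightarrow> nat \<Rightarrow> nat \<Rightarrow> real"
  assumes k_pos: "\<And>i. i < p \<Longrightarrow> 0 < k i"
    and m_def: "m = (\<Sum>i<p. k i)"
    and sigma_pos: "0 < sigma2"
    and orth: "\<And>n c c'. m \<le> n \<Longrightarrow> c < m \<Longrightarrow> c' < m \<Longrightarrow>
                 (\<Sum>j<n. G n j c * G n j c') = (if c = c' then real n else 0)"
    and i_lt: "i < p"
  shows "(\<forall>n\<ge>m. integrable (noise sigma2 n) (lambda_star k sigma2 G m thbar i n)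
            \<and> (\<integral>v. lambda_star k sigma2 G m thbar i n v \<partial>noise sigma2 n) = lambda_opt k thbar i)
       \<and> (\<lambda>n. \<integral>v. lambda_hat0 k sigma2 G m thbar i n v \<partial>noise sigma2 n)
            \<longlonglongrightarrow> lambda_opt k thbar i
       \<and> (\<forall>n\<ge>m. integrable (noise sigma2 n)
               (\<lambda>v. (lambda_star k sigma2 G m thbar i n v - lambda_opt k thbar i)\<^sup>2))
       \<and> (\<lambda>n. \<integral>v. (lambda_star k sigma2 G m thbar i n v - lambda_opt k thbar i)\<^sup>2 \<partial>noise sigma2 n)
            \<longlonglongrightarrow> 0
       \<and> (\<forall>n\<ge>m. integrable (noise sigma2 n) (lambda_hat0 k sigma2 G m thbar i n)
            \<and> integrable (noise sigma2 n)
               (\<lambda>v. (lambda_hat0 k sigma2 G m thbar i n v - lambda_opt k thbar i)\<^sup>2))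
       \<and> (\<lambda>n. \<integral>v. (lambda_hat0 k sigma2 G m thbar i n v - lambda_opt k thbar i)\<^sup>2 \<partial>noise sigma2 n)
            \<longlonglongrightarrow> 0"
proof -
  note PN = per_n[OF k_pos m_def sigma_pos orth i_lt]
  define a where "a = lambda_opt k thbar i"
  define S where "S = (\<Sum>c\<in>blk k i. (thbar c)\<^sup>2)"
  define K where "K = real (k i)"
  define C where "C = (\<lambda>n::nat. 12 * S * sigma2 / (K * real n) + 12 * sigma2\<^sup>2 / (real n)\<^sup>2)"
  define D where "D = (\<lambda>n. \<integral>v. (lambda_star k sigma2 G m thbar i n v - a)\<^sup>2 \<partial>noise sigma2 n)"
  define H where "H = (\<lambda>n. \<integral>v. (lambda_hat0 k sigma2 G m thbar i n v - a)\<^sup>2 \<partial>noise sigma2 n)"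
  define g where "g = (\<lambda>n. \<integral>v. lambda_hat0 k sigma2 G m thbar i n v \<partial>noise sigma2 n)"
  have C0: "C \<longlonglongrightarrow> 0"
  proof -
    have "(\<lambda>n. (12 * S * sigma2 / K) * inverse (real n) + (12 * sigma2\<^sup>2) * (inverse (real n))\<^sup>2)
       \<longlonglongrightarrow> (12 * S * sigma2 / K) * 0 + (12 * sigma2\<^sup>2) * 0\<^sup>2"
      by (intro tendsto_intros lim_inverse_n)
    moreover have "(\<lambda>n. (12 * S * sigma2 / K) * inverse (real n) + (12 * sigma2\<^sup>2) * (inverse (real n))\<^sup>2) = C"
      unfolding C_def by (rule ext) (simp add: divide_inverse power_inverse mult.assoc)
    ultimately show ?thesis by simp
  qed
  have ev: "eventually (\<lambda>n. m \<le> n) sequentially" by (rule eventually_ge_at_top)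
  have D0: "D \<longlonglongrightarrow> 0"
  proof (rule tendsto_sandwich[OF _ _ tendsto_const C0])
    show "eventually (\<lambda>n. 0 \<le> D n) sequentially"
      unfolding D_def by (intro always_eventually allI Bochner_Integration.integral_nonneg) simp
    show "eventually (\<lambda>n. D n \<le> C n) sequentially"
      using ev by eventually_elim (use PN in \<open>simp add: D_def C_def a_def S_def K_def\<close>)
  qed
  have H0: "H \<longlonglongrightarrow> 0"
  proof (rule tendsto_sandwich[OF _ _ tendsto_const D0])
    show "eventually (\<lambda>n. 0 \<le> H n) sequentially"
      unfolding H_def by (intro always_eventually allI Bochner_Integration.integral_nonneg) simp
    show "eventually (\<lambda>n. H n \<le> D n) sequentially"
      using ev by eventually_elim (use PN in \<open>simp add: D_def H_def a_def\<close>)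
  qed
  have g2: "(\<lambda>n. (g n - a)\<^sup>2) \<longlonglongrightarrow> 0"
  proof (rule tendsto_sandwich[OF _ _ tendsto_const H0])
    show "eventually (\<lambda>n. 0 \<le> (g n - a)\<^sup>2) sequentially" by simp
    show "eventually (\<lambda>n. (g n - a)\<^sup>2 \<le> H n) sequentially"
      using ev by eventually_elim (use PN in \<open>simp add: g_def H_def a_def\<close>)
  qed
  have "(\<lambda>n. sqrt ((g n - a)\<^sup>2)) \<longlonglongrightarrow> sqrt 0" by (rule tendsto_real_sqrt[OF g2])
  then have "(\<lambda>n. \<bar>g n - a\<bar>) \<longlonglongrightarrow> 0" by simp
  then have "(\<lambda>n. g n - a) \<longlonglongrightarrow> 0" by (simp add: tendsto_rabs_zero_iff)
  then have gl: "g \<longlonglongrightarrow> a" by (simp add: LIM_zero_iff)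
  show ?thesis
    using PN gl D0 H0 unfolding g_def D_def H_def a_def by auto
qed

end
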